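(* Let $d, k_1, \ldots, k_d$ be positive integers, $n=k_1+\cdots+k_d$, and let $A$ be the $n\times n$ block matrix \[ A=\begin{pmatrix} A_1 & a_{12}\mathbf{1} & \cdots & a_{1d}\mathbf{1} \\ a_{21}\mathbf{1} & A_2 & \cdots & a_{2d}\mathbf{1} \\ \vdots & \vdots & \ddots & \vdots \\ a_{d1}\mathbf{1} & a_{d2}\mathbf{1} & \cdots & A_d \end{pmatrix}, \] where each $A_i$ is a normal, $r_{A_i}$-row regular complex $k_i\times k_i$ matrix and each $a_{ij}\mathbf{1}$ ($i\ne j$) is the $k_i\times k_j$ matrix all of whose entries equal $a_{ij}\in\mathbb{C}$. Let $\overline{A}$ be the $d\times d$ matrix with diagonal entries $\overline{A}_{ii}=r_{A_i}$ and off-diagonal entries $\overline{A}_{ij}=a_{ij}k_j$ for $i\neq j$. For each $i$, let $r_{A_i}=\lambda_1^{A_i},\lambda_2^{A_i},\ldots,\lambda_{k_i}^{A_i}$ be the eigenvalues of $A_i$ listed with multiplicity (so the multiset $\{\lambda_2^{A_i},\dots,\lambda_{k_i}^{A_i}\}$ is the spectrum of $A_i$ with one copy of $r_{A_i}$ removed). Then the characteristic polynomials satisfy \[ p_{A}(t)= p_{\overline{A}}(t) \prod_{\substack{1 \leq i \leq d, \\ 2 \leq j \leq k_i}} (t-\lambda_{j}^{A_i}), \] equivalently $p_A(t)\prod_{i=1}^d (t-r_{A_i}) = p_{\overline A}(t)\prod_{i=1}^d p_{A_i}(t)$.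
   Context: A complex square matrix $M$ is normal if $MM^*=M^*M$ ($M^*$ the conjugate transpose), and $r_M$-row regular if every row of $M$ sums to $r_M$ (for normal row regular $M$, $r_M$ is an eigenvalue of $M$). $p_M(t)=\det(tI-M)$ denotes the characteristic polynomial. *)

theory Defs
  imports "Jordan_Normal_Form.Schur_Decomposition"
begin

definition normal_mat :: "complex mat \<Rightarrow> bool" where
  "normal_mat M \<longleftrightarrow> M \<in> carrier_mat (dim_row M) (dim_row M) \<and>
     M * mat_adjoint M = mat_adjoint M * M"

definition row_regular :: "complex mat \<Rightarrow> complex \<Rightarrow> bool" where
  "row_regular M r \<longleftrightarrow> (\<forall>p < dim_row M. (\<Sum>q < dim_col M. M $$ (p, q)) = r)"

text \<open>Offset of block i: k_0 + ... + k_(i-1) (blocks indexed from 0).\<close>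
definition blk_off :: "(nat \<Rightarrow> nat) \<Rightarrow> nat \<Rightarrow> nat" where
  "blk_off k i = (\<Sum>l < i. k l)"

definition blk_of :: "(nat \<Rightarrow> nat) \<Rightarrow> nat \<Rightarrow> nat" where
  "blk_of k p = (LEAST i. p < blk_off k (Suc i))"

definition block_const_mat ::
  "nat \<Rightarrow> (nat \<Rightarrow> nat) \<Rightarrow> (nat \<Rightarrow> complex mat) \<Rightarrow> (nat \<Rightarrow> nat \<Rightarrow> complex) \<Rightarrow> complex mat" where
  "block_const_mat d k As a = mat (blk_off k d) (blk_off k d) (\<lambda>(p, q).
     (let i = blk_of k p; j = blk_of k q in
      if i = j then As i $$ (p - blk_off k i, q - blk_off k i) else a i j))"

definition quotient_mat ::
  "nat \<Rightarrow> (nat \<Rightarrow> nat) \<Rightarrow> (nat \<Rightarrow> complex) \<Rightarrow> (nat \<Rightarrow> nat \<Rightarrow> complex) \<Rightarrow> complex mat" where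
  "quotient_mat d k r a = mat d d (\<lambda>(i, j). if i = j then r i else a i j * of_nat (k j))"

end

theory Submission
  imports Defs
begin

lemma strict_mono_ge:
  fixes g :: "nat \<Rightarrow> nat"
  assumes mono: "\<And>i j. i < j \<Longrightarrow> j < m \<Longrightarrow> g i < g j"
  shows "i \<le> j \<Longrightarrow> j < m \<Longrightarrow> g i + (j - i) \<le> g j"
proof (induction j)
  case 0 then show ?case by simp
next
  case (Suc j)
  show ?case
  proof (cases "i = Suc j")
    case True then show ?thesis by simp
  next
    case False
    then have "i \<le> j" using Suc by simp
    with Suc have "g i + (j - i) \<le> g j" by simp
    moreover have "g j < g (Suc j)" using mono Suc by simp
    ultimately show ?thesis using \<open>i \<le> j\<close> by simp
  qed
qed

lemma unit_rows_det:
  fixes N :: "'a::comm_ring_1 mat"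
  assumes "N \<in> carrier_mat n n"
    and "\<And>i j. i < j \<Longrightarrow> j < m \<Longrightarrow> g i < g j"
    and "\<And>i. i < m \<Longrightarrow> g i < n"
    and "\<And>x y. x < n \<Longrightarrow> y < n \<Longrightarrow> x \<notin> g ` {..<m} \<Longrightarrow> N $$ (x, y) = (if x = y then 1 else 0)"
  shows "det N = det (mat m m (\<lambda>(i, j). N $$ (g i, g j)))"
  using assms
proof (induction n arbitrary: N g)
  case 0
  then have "m = 0" by (metis lessThan_iff not_less_zero neq0_conv)
  then show ?case using 0 by simp
next
  case (Suc n)
  show ?case
  proof (cases "g ` {..<m} = {..<Suc n}")
    case True
    have m1: "Suc n \<le> m"
    proof -
      have "card (g ` {..<m}) \<le> m" using card_image_le[of "{..<m}" g] by simp
      then show ?thesis using True by simp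
    qed
    have jle: "j < Suc n" if "j < m" for j
      using strict_mono_ge[of m g 0 j] Suc.prems(2) Suc.prems(3)[OF that] that by simp
    have mle: "m = Suc n"
    proof (rule ccontr)
      assume "m \<noteq> Suc n"
      with m1 have "Suc n < m" by simp
      with jle[of "Suc n"] show False by simp
    qed
    have gid: "g i = i" if "i < m" for i
    proof -
      have "g 0 + (i - 0) \<le> g i" using strict_mono_ge[of m g 0 i] Suc.prems(2) that by simp
      moreover have "g i + (m - 1 - i) \<le> g (m - 1)" using strict_mono_ge[of m g i "m-1"] Suc.prems(2) that by simp
      moreover have "g (m - 1) < Suc n" using Suc.prems(3) that by simp
      ultimately show ?thesis using mle that by linarith
    qed
    have "mat m m (\<lambda>(i, j). N $$ (g i, g j)) = N"
      by (rule eq_matI, insert Suc.prems(1) mle gid, auto)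
    then show ?thesis by simp
  next
    case False
    have "g ` {..<m} \<subseteq> {..<Suc n}" using Suc.prems(3) by auto
    with False obtain x where x: "x < Suc n" "x \<notin> g ` {..<m}" by auto
    have "det N = (\<Sum>j<Suc n. N $$ (x,j) * cofactor N x j)"
      by (rule laplace_expansion_row[OF Suc.prems(1) x(1)])
    also have "\<dots> = (\<Sum>j<Suc n. if j = x then cofactor N x j else 0)"
      by (rule sum.cong, auto simp: Suc.prems(4)[OF x(1) _ x(2)])
    also have "\<dots> = cofactor N x x" using x by simp
    also have "\<dots> = det (mat_delete N x x)" unfolding cofactor_def
      using neg_one_even_power[of "x + x", where ?'a = 'a] by simp
    finally have dN: "det N = det (mat_delete N x x)" .
    define g' where "g' i = (if g i < x then g i else g i - 1)" for i
    define N' where "N' = mat_delete N x x"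
    have N': "N' \<in> carrier_mat n n" unfolding N'_def using mat_delete_carrier[OF Suc.prems(1)] by simp
    have gx: "i < m \<Longrightarrow> g i \<noteq> x" for i using x(2) by auto
    have ins: "i < m \<Longrightarrow> (if g' i < x then g' i else Suc (g' i)) = g i" for i
      using gx[of i] unfolding g'_def by auto
    have IH: "det N' = det (mat m m (\<lambda>(i, j). N' $$ (g' i, g' j)))"
    proof (rule Suc.IH[OF N'])
      show "g' i < g' j" if "i < j" "j < m" for i j
        using Suc.prems(2)[OF that] gx[of i] gx[of j] that unfolding g'_def by auto
      show "g' i < n" if "i < m" for i
        using Suc.prems(3)[OF that] gx[of i] that x(1) unfolding g'_def by auto
      show "N' $$ (a, b) = (if a = b then 1 else 0)" if ab: "a < n" "b < n" "a \<notin> g' ` {..<m}" for a b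
      proof -
        define A where "A = (if a < x then a else Suc a)"
        define B where "B = (if b < x then b else Suc b)"
        have "A \<notin> g ` {..<m}"
        proof
          assume "A \<in> g ` {..<m}"
          then obtain i where i: "i < m" "A = g i" by auto
          then have "g' i = a" unfolding g'_def A_def using gx[of i] by (auto split: if_splits)
          then show False using ab i by auto
        qed
        moreover have "A < Suc n" "B < Suc n" using ab unfolding A_def B_def by auto
        ultimately have "N $$ (A, B) = (if A = B then 1 else 0)" using Suc.prems(4) by simp
        moreover have "N' $$ (a, b) = N $$ (A, B)" unfolding N'_def mat_delete_def A_def B_def
          using ab Suc.prems(1) by auto
        moreover have "(A = B) = (a = b)" unfolding A_def B_def by auto
        ultimately show ?thesis by simp
      qed
    qed
    have "mat m m (\<lambda>(i, j). N' $$ (g' i, g' j)) = mat m m (\<lambda>(i, j). N $$ (g i, g j))"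
    proof (rule eq_matI)
      fix i j assume ij: "i < dim_row (mat m m (\<lambda>(i, j). N $$ (g i, g j)))"
        "j < dim_col (mat m m (\<lambda>(i, j). N $$ (g i, g j)))"
      then have "i < m" "j < m" by auto
      moreover have "g' i < n" "g' j < n" using Suc.prems(3)[OF \<open>i < m\<close>] Suc.prems(3)[OF \<open>j < m\<close>]
          gx[OF \<open>i < m\<close>] gx[OF \<open>j < m\<close>] x(1) unfolding g'_def
        by auto
      ultimately show "mat m m (\<lambda>(i, j). N' $$ (g' i, g' j)) $$ (i, j) = mat m m (\<lambda>(i, j). N $$ (g i, g j)) $$ (i, j)"
        unfolding N'_def mat_delete_def using Suc.prems(1) ins by auto
    qed auto
    then show ?thesis using dN IH N'_def by simp
  qed
qed

definition rmask :: "nat set \<Rightarrow> 'a::comm_ring_1 mat \<Rightarrow> 'a mat" where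
  "rmask S N = mat (dim_row N) (dim_row N) (\<lambda>(p, y). if p \<in> S then N $$ (p, y) else if p = y then 1 else 0)"

lemma split_det:
  fixes N :: "'a::comm_ring_1 mat"
  assumes N: "N \<in> carrier_mat n n"
    and z: "\<And>p y. p < n \<Longrightarrow> y < n \<Longrightarrow> p \<in> S \<Longrightarrow> y \<notin> S \<Longrightarrow> N $$ (p, y) = 0"
  shows "det N = det (rmask S N) * det (rmask (- S) N)"
proof -
  have "rmask S N * rmask (- S) N = N"
  proof (rule eq_matI)
    fix p y assume "p < dim_row N" "y < dim_col N"
    then have py: "p < n" "y < n" using N by auto
    have "(rmask S N * rmask (- S) N) $$ (p, y) = (\<Sum>x<n. rmask S N $$ (p, x) * rmask (- S) N $$ (x, y))"
      using N py by (simp add: rmask_def scalar_prod_def atLeast0LessThan)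
    also have "\<dots> = (\<Sum>x<n. if x = (if p \<in> S then y else p) then N $$ (p, y) else 0)"
      by (rule sum.cong, insert N py z, auto simp: rmask_def)
    also have "\<dots> = N $$ (p, y)" using py by auto
    finally show "(rmask S N * rmask (- S) N) $$ (p, y) = N $$ (p, y)" .
  qed (insert N, auto simp: rmask_def)
  moreover have "rmask S N \<in> carrier_mat n n" "rmask (- S) N \<in> carrier_mat n n"
    using N by (auto simp: rmask_def)
  ultimately show ?thesis using det_mult by metis
qed

lemma chain_det:
  fixes N :: "'a::comm_ring_1 mat" and d m :: nat and C :: "nat \<Rightarrow> nat set"
  assumes N: "N \<in> carrier_mat n n"
    and z: "\<And>i p y. i < d \<Longrightarrow> p < n \<Longrightarrow> y < n \<Longrightarrow> p \<in> C i \<Longrightarrow> y \<notin> C i \<Longrightarrow> N $$ (p, y) = 0"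
    and disj: "\<And>i j. i < d \<Longrightarrow> j < d \<Longrightarrow> i \<noteq> j \<Longrightarrow> C i \<inter> C j = {}"
  shows "m \<le> d \<Longrightarrow> det N = (\<Prod>i<m. det (rmask (C i) N)) * det (rmask (- (\<Union>i<m. C i)) N)"
proof (induction m)
  case 0
  have "rmask UNIV N = N" by (rule eq_matI, insert N, auto simp: rmask_def)
  then show ?case by simp
next
  case (Suc m)
  let ?U = "\<Union>i<m. C i"
  let ?Nm = "rmask (- ?U) N"
  have Nm: "?Nm \<in> carrier_mat n n" using N by (simp add: rmask_def)
  have notU: "p \<in> C m \<Longrightarrow> p \<notin> ?U" for p proof
    assume "p \<in> C m" "p \<in> ?U"
    then obtain j where "j < m" "p \<in> C j" by auto
    then show False using disj[of m j] Suc.prems \<open>p \<in> C m\<close> by auto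
  qed
  have e1: "det ?Nm = det (rmask (C m) ?Nm) * det (rmask (- C m) ?Nm)"
    by (rule split_det[OF Nm], insert N notU z[of m] Suc.prems, auto simp: rmask_def)
  have e2: "rmask (C m) ?Nm = rmask (C m) N"
    by (rule eq_matI, insert N notU, auto simp: rmask_def)
  have e3: "rmask (- C m) ?Nm = rmask (- (\<Union>i<Suc m. C i)) N"
    by (rule eq_matI, insert N, auto simp: rmask_def lessThan_Suc)
  have IH: "det N = (\<Prod>i<m. det (rmask (C i) N)) * det ?Nm" using Suc.IH Suc.prems by simp
  have P: "(\<Prod>i<Suc m. det (rmask (C i) N)) = (\<Prod>i<m. det (rmask (C i) N)) * det (rmask (C m) N)"
    by (rule prod.lessThan_Suc)
  have "det N = (\<Prod>i<m. det (rmask (C i) N)) * (det (rmask (C m) N) * det (rmask (- (\<Union>i<Suc m. C i)) N))"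
    using IH unfolding e1 e2 e3 .
  then show ?case unfolding P mult.assoc .
qed


lemma blk_off_Suc: "blk_off k (Suc i) = blk_off k i + k i"
  unfolding blk_off_def by simp

lemma blk_off_mono: "i \<le> j \<Longrightarrow> blk_off k i \<le> blk_off k j"
  unfolding blk_off_def by (rule sum_mono2, auto)

lemma blk_of_eq: "blk_off k i \<le> p \<Longrightarrow> p < blk_off k (Suc i) \<Longrightarrow> blk_of k p = i"
  unfolding blk_of_def
proof (rule Least_equality)
  fix j assume "blk_off k i \<le> p" "p < blk_off k (Suc j)"
  show "i \<le> j"
  proof (rule ccontr)
    assume "\<not> i \<le> j"
    then have "Suc j \<le> i" by simp
    from blk_off_mono[OF this, of k] show False using \<open>blk_off k i \<le> p\<close> \<open>p < blk_off k (Suc j)\<close> by simp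
  qed
qed

lemma blk_exists: "p < blk_off k d \<Longrightarrow> \<exists>i<d. blk_off k i \<le> p \<and> p < blk_off k (Suc i)"
proof (induction d)
  case 0 then show ?case by (simp add: blk_off_def)
next
  case (Suc d)
  show ?case
  proof (cases "p < blk_off k d")
    case True with Suc show ?thesis by (meson less_SucI)
  next
    case False with Suc.prems show ?thesis by (intro exI[of _ d], auto)
  qed
qed

lemma blk_of_props: assumes "p < blk_off k d"
  shows "blk_of k p < d" "blk_off k (blk_of k p) \<le> p" "p < blk_off k (Suc (blk_of k p))"
proof -
  obtain i where i: "i < d" "blk_off k i \<le> p" "p < blk_off k (Suc i)" using blk_exists[OF assms] by blast
  have b: "blk_of k p = i" using blk_of_eq[OF i(2,3)] .
  from i b show "blk_of k p < d" "blk_off k (blk_of k p) \<le> p" "p < blk_off k (Suc (blk_of k p))" by simp_all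
qed

lemma blk_of_off: "0 < k i \<Longrightarrow> blk_of k (blk_off k i) = i"
  using blk_of_eq[of k i "blk_off k i"] blk_off_Suc[of k i] by simp

lemma blk_off_less: "i < j \<Longrightarrow> blk_off k (Suc i) \<le> blk_off k j"
  by (rule blk_off_mono, simp)

definition bc :: "nat \<Rightarrow> (nat \<Rightarrow> nat) \<Rightarrow> (nat \<Rightarrow> 'a::comm_ring_1 mat) \<Rightarrow> (nat \<Rightarrow> nat \<Rightarrow> 'a) \<Rightarrow> 'a mat" where
  "bc d k As a = mat (blk_off k d) (blk_off k d) (\<lambda>(p, q).
     (let i = blk_of k p; j = blk_of k q in
      if i = j then As i $$ (p - blk_off k i, q - blk_off k i) else a i j))"

definition qm :: "nat \<Rightarrow> (nat \<Rightarrow> nat) \<Rightarrow> (nat \<Rightarrow> 'a::comm_ring_1) \<Rightarrow> (nat \<Rightarrow> nat \<Rightarrow> 'a) \<Rightarrow> 'a mat" where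
  "qm d k r a = mat d d (\<lambda>(i, j). if i = j then r i else a i j * of_nat (k j))"

definition Bpp :: "'a::comm_ring_1 mat \<Rightarrow> 'a mat" where
  "Bpp A = mat (dim_row A - 1) (dim_row A - 1) (\<lambda>(a, b). A $$ (Suc a, Suc b) - A $$ (0, Suc b))"

lemma core:
  fixes B :: "nat \<Rightarrow> 'a::comm_ring_1 mat" and c :: "nat \<Rightarrow> nat \<Rightarrow> 'a" and s :: "nat \<Rightarrow> 'a"
  assumes kpos: "\<And>i. i < d \<Longrightarrow> 0 < k i"
    and Bc: "\<And>i. i < d \<Longrightarrow> B i \<in> carrier_mat (k i) (k i)"
    and rs: "\<And>i p. i < d \<Longrightarrow> p < k i \<Longrightarrow> (\<Sum>q<k i. B i $$ (p, q)) = s i"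
  shows "det (bc d k B c) = det (qm d k s c) * (\<Prod>i<d. det (Bpp (B i)))"
proof -
  define off where "off = blk_off k"
  define blk where "blk = blk_of k"
  define n where "n = off d"
  define M where "M = bc d k B c"
  have Mc: "M \<in> carrier_mat n n" unfolding M_def bc_def n_def off_def by simp
  have Me: "M $$ (p, q) = (if blk p = blk q then B (blk p) $$ (p - off (blk p), q - off (blk p)) else c (blk p) (blk q))"
    if "p < n" "q < n" for p q
    using that unfolding M_def bc_def n_def off_def blk_def by (simp add: Let_def)
  have bp: "blk p < d" "off (blk p) \<le> p" "p < off (Suc (blk p))" if "p < n" for p
    using blk_of_props[of p k d] that unfolding n_def off_def blk_def by simp_all
  have beq: "blk p = i" if "off i \<le> p" "p < off (Suc i)" for p i
    using blk_of_eq[of k i p] that unfolding off_def blk_def by simp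
  have boff: "blk (off i) = i" if "i < d" for i
    using blk_of_off[of k i] kpos[OF that] unfolding off_def blk_def by simp
  have offS: "off (Suc i) = off i + k i" for i unfolding off_def by (rule blk_off_Suc)
  have offle: "off (Suc i) \<le> n" if "i < d" for i unfolding n_def off_def using blk_off_mono[of "Suc i" d k] that by simp
  have offlt: "off i < n" if "i < d" for i using offle[OF that] offS[of i] kpos[OF that] by simp
  have offmono: "off (Suc i) \<le> off j" if "i < j" for i j unfolding off_def using blk_off_less[OF that, of k] by simp
  define R where "R = mat n n (\<lambda>(x, y). if off (blk y) = y then (if blk x = blk y then 1 else 0) else (if x = y then 1 else (0::'a)))"
  define L where "L = mat n n (\<lambda>(p, x). if off (blk p) = p then (if p = x then 1 else 0) else (if p = x then 1 else 0) - (if x = off (blk p) then 1 else (0::'a)))"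
  have Rc: "R \<in> carrier_mat n n" and Lc: "L \<in> carrier_mat n n" unfolding R_def L_def by auto
  have detR: "det R = 1"
  proof -
    have "det R = prod_list (diag_mat R)"
    proof (rule det_lower_triangular[OF _ Rc])
      fix x y assume xy: "x < y" "y < n"
      have "blk x \<noteq> blk y" if "off (blk y) = y" using bp[of x] xy that by auto
      then show "R $$ (x, y) = 0" unfolding R_def using xy by auto
    qed
    also have "diag_mat R = map (\<lambda>_. 1) [0..<n]"
    proof -
      have dr: "dim_row R = n" using Rc by simp
      have d1: "\<And>i. i \<in> set [0..<n] \<Longrightarrow> R $$ (i, i) = 1" unfolding R_def by simp
      show ?thesis unfolding diag_mat_def dr by (rule map_cong[OF refl d1])
    qed
    finally show ?thesis by (simp add: map_replicate_const)
  qed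
  have detL: "det L = 1"
  proof -
    have "det L = prod_list (diag_mat L)"
    proof (rule det_lower_triangular[OF _ Lc])
      fix x y assume xy: "x < y" "y < n"
      then show "L $$ (x, y) = 0" unfolding L_def using bp[of x] by auto
    qed
    also have "diag_mat L = map (\<lambda>_. 1) [0..<n]"
    proof -
      have dr: "dim_row L = n" using Lc by simp
      have d1: "\<And>i. i \<in> set [0..<n] \<Longrightarrow> L $$ (i, i) = 1" unfolding L_def by simp
      show ?thesis unfolding diag_mat_def dr by (rule map_cong[OF refl d1])
    qed
    finally show ?thesis by (simp add: map_replicate_const)
  qed
  define MRv where "MRv p y = (if off (blk y) = y then (if blk p = blk y then s (blk y) else of_nat (k (blk y)) * c (blk p) (blk y)) else M $$ (p, y))" for p y
  have MR: "M * R = mat n n (\<lambda>(p, y). MRv p y)"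
  proof (rule eq_matI)
    fix p y assume "p < dim_row (mat n n (\<lambda>(p, y). MRv p y))" "y < dim_col (mat n n (\<lambda>(p, y). MRv p y))"
    then have py: "p < n" "y < n" by auto
    have "(M * R) $$ (p, y) = (\<Sum>x<n. M $$ (p, x) * R $$ (x, y))"
      using Mc Rc py by (simp add: scalar_prod_def atLeast0LessThan)
    also have "\<dots> = MRv p y"
    proof (cases "off (blk y) = y")
      case False
      have "(\<Sum>x<n. M $$ (p, x) * R $$ (x, y)) = (\<Sum>x<n. if x = y then M $$ (p, y) else 0)"
        by (rule sum.cong, insert False py, auto simp: R_def)
      also have "\<dots> = MRv p y" using False py by (simp add: MRv_def)
      finally show ?thesis .
    next
      case True
      define j where "j = blk y"
      have j: "j < d" "y = off j" using True bp[OF py(2)] unfolding j_def by auto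
      have "(\<Sum>x<n. M $$ (p, x) * R $$ (x, y)) = (\<Sum>x<n. if x \<in> {off j..<off (Suc j)} then M $$ (p, x) else 0)"
      proof (rule sum.cong[OF refl])
        fix x assume "x \<in> {..<n}"
        then have x: "x < n" by simp
        have "(blk x = j) = (x \<in> {off j..<off (Suc j)})"
          using bp[OF x] beq[of j x] by auto
        then show "M $$ (p, x) * R $$ (x, y) = (if x \<in> {off j..<off (Suc j)} then M $$ (p, x) else 0)"
          using x py True unfolding R_def j_def by auto
      qed
      also have "\<dots> = sum (\<lambda>x. M $$ (p, x)) ({..<n} \<inter> {off j..<off (Suc j)})"
        by (rule sum.inter_restrict[symmetric], simp)
      also have "{..<n} \<inter> {off j..<off (Suc j)} = {0 + off j..<k j + off j}"
        using offle[OF j(1)] offS[of j] by auto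
      also have "sum (\<lambda>x. M $$ (p, x)) \<dots> = (\<Sum>q = 0..<k j. M $$ (p, q + off j))"
        by (rule sum.shift_bounds_nat_ivl)
      also have "\<dots> = (\<Sum>q<k j. if blk p = j then B j $$ (p - off j, q) else c (blk p) j)"
      proof (rule sum.cong)
        fix q assume "q \<in> {..<k j}"
        then have q: "q < k j" by simp
        have qn: "q + off j < n" using offle[OF j(1)] offS[of j] q by simp
        have bq: "blk (q + off j) = j" using beq[of j "q + off j"] offS[of j] q by simp
        show "M $$ (p, q + off j) = (if blk p = j then B j $$ (p - off j, q) else c (blk p) j)"
          using Me[OF py(1) qn] bq by (cases "blk p = j") simp_all
      qed (auto simp: atLeast0LessThan)
      also have "\<dots> = MRv p y"
      proof (cases "blk p = j")
        case True
        have "p - off j < k j" using bp[OF py(1)] True offS[of j] by auto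
        then show ?thesis using True rs[OF j(1)] j unfolding MRv_def j_def by auto
      next
        case False
        then show ?thesis using j unfolding MRv_def j_def by auto
      qed
      finally show ?thesis .
    qed
    finally show "(M * R) $$ (p, y) = mat n n (\<lambda>(p, y). MRv p y) $$ (p, y)" using py by simp
  qed (insert Mc Rc, auto)
  define Nv where "Nv p y = (if off (blk p) = p then MRv p y else MRv p y - MRv (off (blk p)) y)" for p y
  define N where "N = mat n n (\<lambda>(p, y). Nv p y)"
  have Nc: "N \<in> carrier_mat n n" unfolding N_def by simp
  have LMR: "L * (M * R) = N"
  proof (rule eq_matI)
    fix p y assume "p < dim_row N" "y < dim_col N"
    then have py: "p < n" "y < n" by (auto simp: N_def)
    have fp: "off (blk p) < n" using bp[OF py(1)] offlt by auto
    have "(L * (M * R)) $$ (p, y) = (\<Sum>x<n. L $$ (p, x) * MRv x y)"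
      using Lc py by (simp add: MR scalar_prod_def atLeast0LessThan)
    also have "\<dots> = Nv p y"
    proof (cases "off (blk p) = p")
      case True
      have "(\<Sum>x<n. L $$ (p, x) * MRv x y) = (\<Sum>x<n. if x = p then MRv x y else 0)"
        by (rule sum.cong, insert True py, auto simp: L_def)
      then show ?thesis using True py by (simp add: Nv_def)
    next
      case False
      have "(\<Sum>x<n. L $$ (p, x) * MRv x y) = (\<Sum>x<n. (if x = p then MRv x y else 0) - (if x = off (blk p) then MRv x y else 0))"
        by (rule sum.cong, insert False py, auto simp: L_def)
      also have "\<dots> = MRv p y - MRv (off (blk p)) y"
        unfolding sum_subtractf using py fp by simp
      finally show ?thesis using False by (simp add: Nv_def)
    qed
    finally show "(L * (M * R)) $$ (p, y) = N $$ (p, y)" using py by (simp add: N_def)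
  qed (insert Lc Rc, auto simp: N_def)
  have detN: "det N = det M"
  proof -
    have "det N = det L * det (M * R)" using LMR det_mult[OF Lc mult_carrier_mat[OF Mc Rc]] by simp
    also have "\<dots> = det M" using det_mult[OF Mc Rc] detL detR by simp
    finally show ?thesis .
  qed
  define Comp where "Comp i = {Suc (off i)..<off (Suc i)}" for i
  have NvP1: "Nv p y = 0" if i: "i < d" and p: "p \<in> Comp i" and y: "y < n" "y \<notin> Comp i" for i p y
  proof -
    have pb: "off i < p" "p < off (Suc i)" using p unfolding Comp_def by auto
    have bpi: "blk p = i" using beq[of i p] pb by simp
    have pn: "p < n" using pb offle[OF i] by simp
    have nf: "off (blk p) \<noteq> p" using bpi pb by simp
    have fi: "blk (off i) = i" using boff[OF i] .
    have Nv_eq: "Nv p y = MRv p y - MRv (off i) y" unfolding Nv_def using nf bpi by simp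
    show ?thesis
    proof (cases "off (blk y) = y")
      case True
      then show ?thesis unfolding Nv_eq MRv_def using bpi fi by simp
    next
      case False
      define j where "j = blk y"
      have ji: "j \<noteq> i"
      proof
        assume "j = i"
        then have "off i \<le> y" "y < off (Suc i)" "y \<noteq> off i" using bp[OF y(1)] False unfolding j_def by auto
        then show False using y(2) unfolding Comp_def by auto
      qed
      have "M $$ (p, y) = c i j" using Me[OF pn y(1)] bpi ji unfolding j_def by simp
      moreover have "M $$ (off i, y) = c i j" using Me[OF offlt[OF i] y(1)] fi ji unfolding j_def by simp
      ultimately show ?thesis unfolding Nv_eq MRv_def using False by simp
    qed
  qed
  have NvP2: "Nv (Suc (off i) + a) (Suc (off i) + b) = B i $$ (Suc a, Suc b) - B i $$ (0, Suc b)"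
    if i: "i < d" and ab: "a < k i - 1" "b < k i - 1" for i a b
  proof -
    define p where "p = Suc (off i) + a"
    define y where "y = Suc (off i) + b"
    have pb: "off i < p" "p < off (Suc i)" using ab offS[of i] unfolding p_def by auto
    have yb: "off i < y" "y < off (Suc i)" using ab offS[of i] unfolding y_def by auto
    have bpi: "blk p = i" using beq[of i p] pb by simp
    have byi: "blk y = i" using beq[of i y] yb by simp
    have pn: "p < n" using pb offle[OF i] by simp
    have yn: "y < n" using yb offle[OF i] by simp
    have fi: "blk (off i) = i" using boff[OF i] .
    have nfp: "off (blk p) \<noteq> p" using bpi pb by simp
    have nfy: "off (blk y) \<noteq> y" using byi yb by simp
    have "Nv p y = M $$ (p, y) - M $$ (off i, y)" unfolding Nv_def MRv_def using nfp nfy bpi by simp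
    also have "M $$ (p, y) = B i $$ (Suc a, Suc b)" using Me[OF pn yn] bpi byi unfolding p_def y_def by simp
    also have "M $$ (off i, y) = B i $$ (0, Suc b)" using Me[OF offlt[OF i] yn] fi byi unfolding y_def by simp
    finally show ?thesis unfolding p_def y_def .
  qed
  have NvP3: "Nv (off i) (off j) = qm d k s c $$ (i, j)" if "i < d" "j < d" for i j
    using boff[OF that(1)] boff[OF that(2)] that unfolding Nv_def MRv_def qm_def by (simp add: mult.commute)
  have disj: "Comp i \<inter> Comp j = {}" if "i < d" "j < d" "i \<noteq> j" for i j
  proof (cases "i < j")
    case True
    then show ?thesis using offmono[OF True] unfolding Comp_def by auto
  next
    case False
    then have "j < i" using that by simp
    then show ?thesis using offmono[of j i] unfolding Comp_def by auto
  qed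
  have chain: "det N = (\<Prod>i<d. det (rmask (Comp i) N)) * det (rmask (- (\<Union>i<d. Comp i)) N)"
    by (rule chain_det[OF Nc _ disj], insert NvP1, auto simp: N_def)
  have dC: "det (rmask (Comp i) N) = det (Bpp (B i))" if i: "i < d" for i
  proof -
    have "det (rmask (Comp i) N) = det (mat (k i - 1) (k i - 1) (\<lambda>(a, b). rmask (Comp i) N $$ (Suc (off i) + a, Suc (off i) + b)))"
    proof (rule unit_rows_det)
      show "rmask (Comp i) N \<in> carrier_mat n n" using Nc by (simp add: rmask_def)
      show "Suc (off i) + a < n" if "a < k i - 1" for a using that offle[OF i] offS[of i] by simp
      show "rmask (Comp i) N $$ (x, y) = (if x = y then 1 else 0)"
        if "x < n" "y < n" "x \<notin> (\<lambda>a. Suc (off i) + a) ` {..<k i - 1}" for x y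
      proof -
        have "x \<notin> Comp i"
        proof
          assume "x \<in> Comp i"
          then have "x = Suc (off i) + (x - Suc (off i))" "x - Suc (off i) < k i - 1"
            unfolding Comp_def using offS[of i] by auto
          then show False using that(3) by blast
        qed
        then show ?thesis using that Nc by (simp add: rmask_def)
      qed
    qed simp
    also have "mat (k i - 1) (k i - 1) (\<lambda>(a, b). rmask (Comp i) N $$ (Suc (off i) + a, Suc (off i) + b)) = Bpp (B i)"
    proof (rule eq_matI)
      fix a b assume "a < dim_row (Bpp (B i))" "b < dim_col (Bpp (B i))"
      then have ab: "a < k i - 1" "b < k i - 1" using Bc[OF i] by (auto simp: Bpp_def)
      have inC: "Suc (off i) + a \<in> Comp i" using ab offS[of i] unfolding Comp_def by auto
      have lt: "Suc (off i) + a < n" "Suc (off i) + b < n" using ab offle[OF i] offS[of i] by auto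
      show "mat (k i - 1) (k i - 1) (\<lambda>(a, b). rmask (Comp i) N $$ (Suc (off i) + a, Suc (off i) + b)) $$ (a, b) = Bpp (B i) $$ (a, b)"
        using ab inC lt Nc Bc[OF i] NvP2[OF i ab] by (simp add: rmask_def N_def Bpp_def)
    qed (insert Bc[OF i], auto simp: Bpp_def)
    finally show ?thesis .
  qed
  have dQ: "det (rmask (- (\<Union>i<d. Comp i)) N) = det (qm d k s c)"
  proof -
    have offC: "off a \<notin> Comp i" if "a < d" for a i
    proof
      assume "off a \<in> Comp i"
      then have "off i < off a" "off a < off (Suc i)" unfolding Comp_def by auto
      then have "blk (off a) = i" using beq[of i "off a"] by simp
      then have "a = i" using boff[OF that] by simp
      then show False using \<open>off i < off a\<close> by simp
    qed
    have "det (rmask (- (\<Union>i<d. Comp i)) N) = det (mat d d (\<lambda>(a, b). rmask (- (\<Union>i<d. Comp i)) N $$ (off a, off b)))"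
    proof (rule unit_rows_det)
      show "rmask (- (\<Union>i<d. Comp i)) N \<in> carrier_mat n n" using Nc by (simp add: rmask_def)
      show "off a < off b" if "a < b" "b < d" for a b using offmono[OF that(1)] offS[of a] kpos[of a] that by simp
      show "off a < n" if "a < d" for a using offlt[OF that] .
      show "rmask (- (\<Union>i<d. Comp i)) N $$ (x, y) = (if x = y then 1 else 0)"
        if "x < n" "y < n" "x \<notin> off ` {..<d}" for x y
      proof -
        have "x \<in> Comp (blk x)" "blk x < d"
        proof -
          have "off (blk x) \<noteq> x"
          proof
            assume "off (blk x) = x"
            then have "x \<in> off ` {..<d}" using bp(1)[OF that(1)] by (metis imageI lessThan_iff)
            then show False using that(3) by simp
          qed
          then show "x \<in> Comp (blk x)" using bp[OF that(1)] unfolding Comp_def by auto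
        qed (use bp[OF that(1)] in auto)
        then show ?thesis using that Nc by (auto simp: rmask_def)
      qed
    qed
    also have "mat d d (\<lambda>(a, b). rmask (- (\<Union>i<d. Comp i)) N $$ (off a, off b)) = qm d k s c"
    proof (rule eq_matI)
      fix a b assume "a < dim_row (qm d k s c)" "b < dim_col (qm d k s c)"
      then have ab: "a < d" "b < d" by (auto simp: qm_def)
      show "mat d d (\<lambda>(a, b). rmask (- (\<Union>i<d. Comp i)) N $$ (off a, off b)) $$ (a, b) = qm d k s c $$ (a, b)"
        using ab offC[OF ab(1)] offlt[OF ab(1)] offlt[OF ab(2)] Nc NvP3[OF ab] by (simp add: rmask_def N_def)
    qed (auto simp: qm_def)
    finally show ?thesis .
  qed
  have "det M = det N" using detN by simp
  also have "\<dots> = (\<Prod>i<d. det (Bpp (B i))) * det (qm d k s c)" unfolding chain dQ using dC by simp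
  finally show ?thesis unfolding M_def by (simp add: mult.commute)
qed


lemma single_block:
  fixes A :: "'a::comm_ring_1 mat"
  assumes A: "A \<in> carrier_mat m m" and m: "0 < m"
    and rs: "\<And>p. p < m \<Longrightarrow> (\<Sum>q<m. A $$ (p, q)) = s"
  shows "det A = s * det (Bpp A)"
proof -
  define k' where "k' = (\<lambda>_::nat. m)"
  have off1: "blk_off k' 1 = m" unfolding blk_off_def k'_def by simp
  have off1': "blk_off k' (Suc 0) = m" using off1 by simp
  have off0: "blk_off k' 0 = 0" unfolding blk_off_def by simp
  have b0: "blk_of k' p = 0" if "p < m" for p
    using blk_of_eq[of k' 0 p] that off0 off1 by simp
  have c0: "det (bc 1 k' (\<lambda>_. A) (\<lambda>_ _. 0)) = det (qm 1 k' (\<lambda>_. s) (\<lambda>_ _. 0)) * (\<Prod>i<(1::nat). det (Bpp A))"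
  proof (rule core[where B="\<lambda>_. A" and s="\<lambda>_. s" and d=1 and k=k' and c="\<lambda>_ _. 0"])
    show "\<And>i. i < 1 \<Longrightarrow> 0 < k' i" using m by (simp add: k'_def)
    show "\<And>i. i < 1 \<Longrightarrow> A \<in> carrier_mat (k' i) (k' i)" using A by (simp add: k'_def)
    show "\<And>i p. i < 1 \<Longrightarrow> p < k' i \<Longrightarrow> (\<Sum>q<k' i. A $$ (p, q)) = s" using rs by (simp add: k'_def)
  qed
  moreover have "bc 1 k' (\<lambda>_. A) (\<lambda>_ _. 0) = A"
    by (rule eq_matI, insert A b0 off0, auto simp: bc_def off1 off1' Let_def)
  moreover have "det (qm 1 k' (\<lambda>_. s) (\<lambda>_ _. 0)) = s"
    by (subst det_single, auto simp: qm_def)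
  ultimately show ?thesis by simp
qed

lemma cpm_entry:
  assumes "A \<in> carrier_mat n n" "p < n" "q < n"
  shows "char_poly_matrix A $$ (p, q) = (if p = q then [:0, 1:] else 0) + [:- A $$ (p, q):]"
  using assms unfolding char_poly_matrix_def by simp

lemma sum_const_poly: "(\<Sum>q\<in>S. [:f q:]) = [:\<Sum>q\<in>S. f q:]"
  by (induction S rule: infinite_finite_induct) auto

lemma cpm_rows:
  fixes A :: "'a::comm_ring_1 mat"
  assumes A: "A \<in> carrier_mat m m" and p: "p < m" and rs: "(\<Sum>q<m. A $$ (p, q)) = r"
  shows "(\<Sum>q<m. char_poly_matrix A $$ (p, q)) = [:- r, 1:]"
proof -
  have "(\<Sum>q<m. char_poly_matrix A $$ (p, q)) = (\<Sum>q<m. (if q = p then [:0, 1:] else 0) + [:- A $$ (p, q):])"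
    by (rule sum.cong, insert A p, auto simp: cpm_entry)
  also have "\<dots> = [:0, 1:] + [:\<Sum>q<m. - A $$ (p, q):]"
    unfolding sum.distrib sum_const_poly using p by simp
  also have "(\<Sum>q<m. - A $$ (p, q)) = - r" using rs by (simp add: sum_negf)
  finally show ?thesis by simp
qed

lemma cpm_block:
  assumes Asc: "\<And>i. i < d \<Longrightarrow> As i \<in> carrier_mat (k i) (k i)"
  shows "char_poly_matrix (block_const_mat d k As a) = bc d k (\<lambda>i. char_poly_matrix (As i)) (\<lambda>i j. [:- a i j:])"
proof -
  let ?N = "blk_off k d"
  have BC: "block_const_mat d k As a \<in> carrier_mat ?N ?N" unfolding block_const_mat_def by simp
  show ?thesis
  proof (rule eq_matI)
    fix p q assume "p < dim_row (bc d k (\<lambda>i. char_poly_matrix (As i)) (\<lambda>i j. [:- a i j:]))"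
      "q < dim_col (bc d k (\<lambda>i. char_poly_matrix (As i)) (\<lambda>i j. [:- a i j:]))"
    then have pq: "p < ?N" "q < ?N" by (auto simp: bc_def)
    define i where "i = blk_of k p"
    define j where "j = blk_of k q"
    have ip: "i < d" "blk_off k i \<le> p" "p < blk_off k i + k i"
      using blk_of_props[OF pq(1)] blk_off_Suc[of k i] unfolding i_def by auto
    have jq: "j < d" "blk_off k j \<le> q" "q < blk_off k j + k j"
      using blk_of_props[OF pq(2)] blk_off_Suc[of k j] unfolding j_def by auto
    have L: "char_poly_matrix (block_const_mat d k As a) $$ (p, q) =
      (if p = q then [:0, 1:] else 0) + [:- (if i = j then As i $$ (p - blk_off k i, q - blk_off k i) else a i j):]"
      using cpm_entry[OF BC pq] pq unfolding block_const_mat_def i_def j_def by (simp add: Let_def)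
    have R: "bc d k (\<lambda>i. char_poly_matrix (As i)) (\<lambda>i j. [:- a i j:]) $$ (p, q) =
      (if i = j then char_poly_matrix (As i) $$ (p - blk_off k i, q - blk_off k i) else [:- a i j:])"
      using pq unfolding bc_def i_def j_def by (simp add: Let_def)
    show "char_poly_matrix (block_const_mat d k As a) $$ (p, q) = bc d k (\<lambda>i. char_poly_matrix (As i)) (\<lambda>i j. [:- a i j:]) $$ (p, q)"
    proof (cases "i = j")
      case True
      have e: "(p - blk_off k i = q - blk_off k i) = (p = q)" using ip jq True by auto
      have "char_poly_matrix (As i) $$ (p - blk_off k i, q - blk_off k i) =
        (if p - blk_off k i = q - blk_off k i then [:0, 1:] else 0) + [:- As i $$ (p - blk_off k i, q - blk_off k i):]"
        by (rule cpm_entry[OF Asc[OF ip(1)]], insert ip jq True, auto)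
      then show ?thesis unfolding L R e using True by simp
    next
      case False
      then have "p \<noteq> q" unfolding i_def j_def by auto
      then show ?thesis unfolding L R using False by simp
    qed
  qed (insert char_poly_matrix_closed[OF BC], auto simp: bc_def)
qed

lemma cpm_quot:
  "char_poly_matrix (quotient_mat d k r a) = qm d k (\<lambda>i. [:- r i, 1:]) (\<lambda>i j. [:- a i j:])"
proof (rule eq_matI)
  fix i j assume "i < dim_row (qm d k (\<lambda>i. [:- r i, 1:]) (\<lambda>i j. [:- a i j:]))"
    "j < dim_col (qm d k (\<lambda>i. [:- r i, 1:]) (\<lambda>i j. [:- a i j:]))"
  then have ij: "i < d" "j < d" by (auto simp: qm_def)
  have Q: "quotient_mat d k r a \<in> carrier_mat d d" unfolding quotient_mat_def by simp
  show "char_poly_matrix (quotient_mat d k r a) $$ (i, j) = qm d k (\<lambda>i. [:- r i, 1:]) (\<lambda>i j. [:- a i j:]) $$ (i, j)"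
    unfolding cpm_entry[OF Q ij] using ij by (simp add: quotient_mat_def qm_def of_nat_poly)
qed (auto simp: qm_def quotient_mat_def char_poly_matrix_def)

theorem mainTheorem4:
  fixes d :: nat and k :: "nat \<Rightarrow> nat" and As :: "nat \<Rightarrow> complex mat"
    and a :: "nat \<Rightarrow> nat \<Rightarrow> complex" and r :: "nat \<Rightarrow> complex"
    and lam :: "nat \<Rightarrow> nat \<Rightarrow> complex"
  assumes "d > 0"
    and "\<forall>i < d. k i > 0"
    and "\<forall>i < d. As i \<in> carrier_mat (k i) (k i)"
    and "\<forall>i < d. normal_mat (As i)"
    and "\<forall>i < d. row_regular (As i) (r i)"
    and "\<forall>i < d. char_poly (As i) = (\<Prod>j < k i. [:- lam i j, 1:]) \<and> lam i 0 = r i"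
  shows "char_poly (block_const_mat d k As a) =
         char_poly (quotient_mat d k r a) * (\<Prod>i < d. \<Prod>j \<in> {1..<k i}. [:- lam i j, 1:])"
proof -
  have kpos: "\<And>i. i < d \<Longrightarrow> 0 < k i" using assms(2) by auto
  have Asc: "\<And>i. i < d \<Longrightarrow> As i \<in> carrier_mat (k i) (k i)" using assms(3) by auto
  have rs: "(\<Sum>q<k i. As i $$ (p, q)) = r i" if ip: "i < d" "p < k i" for i p
  proof -
    have rr: "row_regular (As i) (r i)" using assms(5) ip by auto
    have dims: "dim_row (As i) = k i" "dim_col (As i) = k i" using Asc[OF ip(1)] by auto
    show ?thesis using rr ip(2) unfolding row_regular_def dims by auto
  qed
  have cpmc: "\<And>i. i < d \<Longrightarrow> char_poly_matrix (As i) \<in> carrier_mat (k i) (k i)"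
    using Asc by simp
  have cprs: "\<And>i p. i < d \<Longrightarrow> p < k i \<Longrightarrow> (\<Sum>q<k i. char_poly_matrix (As i) $$ (p, q)) = [:- r i, 1:]"
    using cpm_rows Asc rs by blast
  have main: "det (bc d k (\<lambda>i. char_poly_matrix (As i)) (\<lambda>i j. [:- a i j:])) =
    det (qm d k (\<lambda>i. [:- r i, 1:]) (\<lambda>i j. [:- a i j:])) * (\<Prod>i<d. det (Bpp (char_poly_matrix (As i))))"
    by (rule core[where B="\<lambda>i. char_poly_matrix (As i)"], insert kpos cpmc cprs, auto)
  have each: "det (Bpp (char_poly_matrix (As i))) = (\<Prod>j \<in> {1..<k i}. [:- lam i j, 1:])" if i: "i < d" for i
  proof -
    have h1: "char_poly (As i) = [:- r i, 1:] * det (Bpp (char_poly_matrix (As i)))"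
      unfolding char_poly_def by (rule single_block[OF cpmc[OF i] kpos[OF i] cprs[OF i]])
    have h2: "char_poly (As i) = [:- r i, 1:] * (\<Prod>j \<in> {1..<k i}. [:- lam i j, 1:])"
    proof -
      have "{..<k i} = insert 0 {1..<k i}" using kpos[OF i] by auto
      then have "(\<Prod>j < k i. [:- lam i j, 1:]) = [:- lam i 0, 1:] * (\<Prod>j \<in> {1..<k i}. [:- lam i j, 1:])"
        by simp
      then show ?thesis using assms(6) i by simp
    qed
    have eq: "[:- r i, 1:] * det (Bpp (char_poly_matrix (As i))) = [:- r i, 1:] * (\<Prod>j \<in> {1..<k i}. [:- lam i j, 1:])"
      using h1 h2 by (rule trans[OF sym])
    have nz: "[:- r i, 1:] \<noteq> 0" by simp
    show ?thesis using mult_left_cancel[OF nz] eq by blast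
  qed
  have "char_poly (block_const_mat d k As a) = det (bc d k (\<lambda>i. char_poly_matrix (As i)) (\<lambda>i j. [:- a i j:]))"
    unfolding char_poly_def using cpm_block[of d As k a] Asc by simp
  also have "\<dots> = det (qm d k (\<lambda>i. [:- r i, 1:]) (\<lambda>i j. [:- a i j:])) * (\<Prod>i<d. det (Bpp (char_poly_matrix (As i))))"
    by (rule main)
  also have "(\<Prod>i<d. det (Bpp (char_poly_matrix (As i)))) = (\<Prod>i < d. \<Prod>j \<in> {1..<k i}. [:- lam i j, 1:])"
    by (rule prod.cong[OF refl], insert each, auto)
  also have "det (qm d k (\<lambda>i. [:- r i, 1:]) (\<lambda>i j. [:- a i j:])) = char_poly (quotient_mat d k r a)"
    unfolding char_poly_def cpm_quot ..
  finally show ?thesis .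
qed

end
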